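(* Let $\mathbf P\in\mathbb{R}^{n\times n}$ be symmetric positive definite and $\mathbf c\in\mathbb{R}^n$. Then $$\ell_{\mathbf c,\mathbf P}(\beta)<-1\quad\text{for all }\beta>\max\{\lambda_{\min}(\mathbf P)^{-1},\,1-\mathbf c^\top\mathbf c\}.$$
   Context: Let $\mathbf P=\mathbf V\mathbf D\mathbf V^\top$ be a spectral decomposition with $\mathbf V$ orthogonal and $\mathbf D$ diagonal with entries $\lambda_i=D_{ii}$; let $\bar{\mathbf c}=\mathbf V^\top\mathbf c$, $S(\bar{\mathbf c})=\{i:\bar c_i\ne0\}$, and $\lambda_{\min}(\mathbf P)$ the smallest eigenvalue of $\mathbf P$. For $\beta>\lambda_{\min}(\mathbf P)^{-1}$, $\ell_{\mathbf c,\mathbf P}(\beta)=-\beta-\sum_{i\in S(\bar{\mathbf c})}\bar c_i^2\frac{\lambda_i\beta}{\lambda_i\beta-1}$. *)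

theory Defs
  imports "HOL-Analysis.Analysis"
begin

definition is_diagonal :: "real^'n^'n \<Rightarrow> bool" where
  "is_diagonal D \<longleftrightarrow> (\<forall>i j. i \<noteq> j \<longrightarrow> D $ i $ j = 0)"

definition pos_def :: "real^'n^'n \<Rightarrow> bool" where
  "pos_def P \<longleftrightarrow> transpose P = P \<and> (\<forall>x. x \<noteq> 0 \<longrightarrow> x \<bullet> (P *v x) > 0)"

definition eigenvalues :: "real^'n^'n \<Rightarrow> real set" where
  "eigenvalues P = {l. \<exists>v. v \<noteq> 0 \<and> P *v v = l *\<^sub>R v}"

definition lambda_min :: "real^'n^'n \<Rightarrow> real" where
  "lambda_min P = Min (eigenvalues P)"

text \<open>ell for the spectral decomposition P = V D V^T, cbar = V^T c.\<close>
definition ell :: "real^'n^'n \<Rightarrow> real^'n^'n \<Rightarrow> real^'n \<Rightarrow> real \<Rightarrow> real" where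
  "ell V D c \<beta> = (let cb = transpose V *v c in
     - \<beta> - (\<Sum>i\<in>{i. cb $ i \<noteq> 0}. (cb $ i)^2 * (D $ i $ i * \<beta> / (D $ i $ i * \<beta> - 1))))"

end

theory Submission
  imports Defs
begin

lemma orth_dot:
  fixes V :: "real^'n^'n"
  assumes "orthogonal_matrix V"
  shows "(V *v x) \<bullet> (V *v y) = x \<bullet> y"
proof -
  have "orthogonal_transformation ((*v) V)"
    using assms by (simp add: orthogonal_transformation_matrix matrix_vector_mul_linear)
  then show ?thesis by (simp add: orthogonal_transformation_def)
qed

lemma diag_mul_axis:
  fixes D :: "real^'n^'n"
  assumes "is_diagonal D"
  shows "D *v axis i 1 = (D $ i $ i) *\<^sub>R axis i 1"
proof -
  have "(D *v axis i 1) $ k = ((D $ i $ i) *\<^sub>R axis i 1) $ k" for k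
  proof -
    have "(D *v axis i 1) $ k = (\<Sum>j\<in>UNIV. D $ k $ j * axis i 1 $ j)"
      by (simp add: matrix_vector_mult_def)
    also have "\<dots> = D $ k $ i"
      by (simp add: axis_def if_distrib sum.delta cong: if_cong)
    finally show ?thesis using assms by (auto simp: is_diagonal_def axis_def)
  qed
  then show ?thesis by (simp add: vec_eq_iff)
qed

theorem proposition2:
  fixes P V D :: "real^'n^'n" and c :: "real^'n" and \<beta> :: real
  assumes "pos_def P"
    and "orthogonal_matrix V" and "is_diagonal D" and "P = V ** D ** transpose V"
    and "\<beta> > max (inverse (lambda_min P)) (1 - c \<bullet> c)"
  shows "ell V D c \<beta> < -1"
proof -
  have VtV: "transpose V ** V = mat 1" and VVt: "V ** transpose V = mat 1"
    using assms(2) by (auto simp: orthogonal_matrix_def)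
  have TV: "transpose V *v (V *v x) = x" for x
  proof -
    have "transpose V *v (V *v x) = (transpose V ** V) *v x" by (simp only: matrix_vector_mul_assoc)
    then show ?thesis using VtV by simp
  qed
  have PV: "P *v (V *v w) = V *v (D *v w)" for w
  proof -
    have "V ** D ** transpose V ** V = V ** D ** (transpose V ** V)" by (simp add: matrix_mul_assoc)
    then show ?thesis using VtV by (simp add: assms(4) matrix_vector_mul_assoc)
  qed
  have eig_pos: "l > 0" if le: "l \<in> eigenvalues P" for l
  proof -
    obtain v where v: "v \<noteq> 0" "P *v v = l *\<^sub>R v" using le by (auto simp: eigenvalues_def)
    have "0 < v \<bullet> (P *v v)" using assms(1) v(1) by (auto simp: pos_def_def)
    also have "\<dots> = l * (v \<bullet> v)" using v(2) by simp
    finally show ?thesis using v(1) inner_ge_zero[of v] by (auto simp: zero_less_mult_iff)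
  qed
  have Di_eig: "D $ i $ i \<in> eigenvalues P" for i
  proof -
    have "V *v axis i 1 \<noteq> 0"
    proof
      assume "V *v axis i 1 = 0"
      then have "transpose V *v (V *v axis i 1) = 0" by simp
      then have "(transpose V ** V) *v axis i 1 = 0" by (simp only: matrix_vector_mul_assoc)
      then show False using VtV by (simp add: axis_eq_0_iff)
    qed
    moreover have "P *v (V *v axis i 1) = (D $ i $ i) *\<^sub>R (V *v axis i 1)"
      by (simp add: PV diag_mul_axis[OF assms(3)] matrix_vector_mult_scaleR)
    ultimately show ?thesis unfolding eigenvalues_def by blast
  qed
  have eig_sub: "eigenvalues P \<subseteq> range (\<lambda>i. D $ i $ i)"
  proof
    fix l assume "l \<in> eigenvalues P"
    then obtain v where v: "v \<noteq> 0" "P *v v = l *\<^sub>R v" by (auto simp: eigenvalues_def)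
    define w where "w = transpose V *v v"
    have "V *v w = (V ** transpose V) *v v" by (simp only: w_def matrix_vector_mul_assoc)
    then have vw: "v = V *v w" using VVt by simp
    have "w \<noteq> 0" using v(1) vw by auto
    then obtain k where k: "w $ k \<noteq> 0" by (auto simp: vec_eq_iff)
    have "V *v (D *v w) = V *v (l *\<^sub>R w)"
      using v(2) PV[of w] vw by (simp add: matrix_vector_mult_scaleR)
    then have "transpose V *v (V *v (D *v w)) = transpose V *v (V *v (l *\<^sub>R w))" by (rule arg_cong)
    then have Dw: "D *v w = l *\<^sub>R w" by (simp only: TV)
    have "(D *v w) $ k = (\<Sum>j\<in>UNIV. D $ k $ j * w $ j)" by (simp add: matrix_vector_mult_def)
    also have "\<dots> = D $ k $ k * w $ k"
      using assms(3) by (subst sum.remove[of _ k]) (auto simp: is_diagonal_def)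
    finally have e1: "(D *v w) $ k = D $ k $ k * w $ k" .
    have "(D *v w) $ k = l * w $ k" unfolding Dw by simp
    with e1 have "D $ k $ k * w $ k = l * w $ k" by linarith
    then have "l = D $ k $ k" using k by simp
    then show "l \<in> range (\<lambda>i. D $ i $ i)" by blast
  qed
  have fin: "finite (eigenvalues P)" by (rule finite_subset[OF eig_sub]) simp
  have lm_le: "lambda_min P \<le> D $ i $ i" for i
    unfolding lambda_min_def using fin Di_eig by simp
  have lm_in: "lambda_min P \<in> eigenvalues P"
    unfolding lambda_min_def using fin Di_eig by (intro Min_in) auto
  have lm_pos: "lambda_min P > 0" using eig_pos lm_in by blast
  have bgt: "\<beta> > inverse (lambda_min P)" and bc: "\<beta> > 1 - c \<bullet> c" using assms(5) by auto
  have bpos: "\<beta> > 0" using bgt lm_pos by (meson less_trans positive_imp_inverse_positive)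
  have Dbeta: "D $ i $ i * \<beta> > 1" for i
  proof -
    have "lambda_min P * inverse (lambda_min P) < lambda_min P * \<beta>"
      using bgt lm_pos by (rule mult_strict_left_mono)
    then have "1 < lambda_min P * \<beta>" using lm_pos by simp
    also have "\<dots> \<le> D $ i $ i * \<beta>"
      using lm_le[of i] bpos by (rule mult_right_mono[OF _ less_imp_le])
    finally show ?thesis .
  qed
  define cb where "cb = transpose V *v c"
  define S where "S = {i. cb $ i \<noteq> 0}"
  have ge: "(cb $ i)^2 * (D $ i $ i * \<beta> / (D $ i $ i * \<beta> - 1)) \<ge> (cb $ i)^2" for i
  proof -
    have "D $ i $ i * \<beta> / (D $ i $ i * \<beta> - 1) \<ge> 1" using Dbeta[of i] by (simp add: field_simps)
    then show ?thesis using mult_left_mono[of 1 _ "(cb $ i)^2"] by (simp only: mult_1_right zero_le_power2)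
  qed
  have "(\<Sum>i\<in>S. (cb $ i)^2) = (\<Sum>i\<in>UNIV. (cb $ i)^2)"
    by (intro sum.mono_neutral_left) (auto simp: S_def)
  also have "\<dots> = cb \<bullet> cb" by (simp add: inner_vec_def power2_eq_square)
  also have "\<dots> = c \<bullet> c" unfolding cb_def by (rule orth_dot) (simp add: assms(2))
  finally have sc: "(\<Sum>i\<in>S. (cb $ i)^2) = c \<bullet> c" .
  have "(\<Sum>i\<in>S. (cb $ i)^2) \<le> (\<Sum>i\<in>S. (cb $ i)^2 * (D $ i $ i * \<beta> / (D $ i $ i * \<beta> - 1)))"
    by (intro sum_mono ge)
  then have "ell V D c \<beta> \<le> - \<beta> - c \<bullet> c"
    using sc unfolding ell_def Let_def cb_def[symmetric] S_def[symmetric] by linarith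
  then show ?thesis using bc by linarith
qed

end
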